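(* Consider $\mathrm{USD}_1$ (stubbornness $p=1$) started from the configuration with $u(0)=0$, $x_1(0)=1$ and $x_2(0)=n-1$. Let $T_1 := \inf\{t \geq 0 : x_2(t) = 0\}$. Then $\Pr[T_1 \leq 7n^2\log^2 n] \geq 1-n^{-2}$.
   Context: Population protocol with $n$ agents, each in a state from $\{1,2,\bot\}$ (Opinion 1, Opinion 2, undecided). At each time step a scheduler picks an ordered pair $(i,j)$ of agents uniformly at random, independently of the past; only the initiator $i$ changes state. In $\mathrm{USD}_p$: if the initiator is $2$ and the responder $1$, the initiator becomes $\bot$; if the initiator is $1$ and the responder $2$, the initiator becomes $\bot$ with probability $1-p$ and otherwise stays $1$ (so for $p=1$ it always stays $1$); if the initiator is $\bot$, it adopts the responder's state; otherwise nothing changes. $x_1(t),x_2(t),u(t)$ are the numbers of agents in states $1,2,\bot$ after $t$ interactions. *)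

theory Defs
  imports "HOL-Probability.Probability"
begin

datatype opinion = Op1 | Op2 | Undec

text \<open>A configuration of n agents, agents are 0..<n (values outside are irrelevant).\<close>
type_synonym config = "nat \<Rightarrow> opinion"

definition count :: "nat \<Rightarrow> opinion \<Rightarrow> config \<Rightarrow> nat" where
  "count n a c = card {i. i < n \<and> c i = a}"

abbreviation x1 where "x1 n c \<equiv> count n Op1 c"
abbreviation x2 where "x2 n c \<equiv> count n Op2 c"
abbreviation und where "und n c \<equiv> count n Undec c"

text \<open>Uniformly random ordered pair (initiator, responder) of distinct agents.\<close>
definition pairs :: "nat \<Rightarrow> (nat \<times> nat) set" where
  "pairs n = {(i, j). i < n \<and> j < n \<and> i \<noteq> j}"

definition interact :: "real \<Rightarrow> config \<Rightarrow> nat \<Rightarrow> nat \<Rightarrow> config pmf" where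
  "interact p c i j =
     (case (c i, c j) of
        (Op2, Op1) \<Rightarrow> return_pmf (c(i := Undec))
      | (Op1, Op2) \<Rightarrow> map_pmf (\<lambda>b. if b then c else c(i := Undec)) (bernoulli_pmf p)
      | (Undec, _) \<Rightarrow> return_pmf (c(i := c j))
      | _ \<Rightarrow> return_pmf c)"

definition usd_step :: "nat \<Rightarrow> real \<Rightarrow> config \<Rightarrow> config pmf" where
  "usd_step n p c = pmf_of_set (pairs n) \<bind> (\<lambda>(i, j). interact p c i j)"

fun usd_run :: "nat \<Rightarrow> real \<Rightarrow> nat \<Rightarrow> config \<Rightarrow> config list pmf" where
  "usd_run n p 0 c = return_pmf [c]"
| "usd_run n p (Suc k) c = usd_step n p c \<bind> (\<lambda>c'. map_pmf (Cons c) (usd_run n p k c'))"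

definition init_conf :: config where
  "init_conf = (\<lambda>i. if i = 0 then Op1 else Op2)"

end

theory Submission
  imports Defs
begin

definition upd :: "config \<Rightarrow> nat \<times> nat \<Rightarrow> config" where
  "upd c x = (case x of (i,j) \<Rightarrow> (case (c i, c j) of (Op2, Op1) \<Rightarrow> c(i := Undec)
      | (Undec, _) \<Rightarrow> c(i := c j) | _ \<Rightarrow> c))"

lemma bern1: "bernoulli_pmf 1 = return_pmf True"
  by (rule pmf_eqI) (auto simp: pmf_return split: split_indicator)

lemma interact1: "interact 1 c i j = return_pmf (upd c (i,j))"
  by (auto simp: interact_def upd_def bern1 split: opinion.splits)

lemma step1: "usd_step n 1 c = map_pmf (upd c) (pmf_of_set (pairs n))"
  unfolding usd_step_def map_pmf_def
  by (rule bind_pmf_cong) (auto simp: interact1)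

lemma pairs_fin: "finite (pairs n)"
proof -
  have "pairs n \<subseteq> {..<n} \<times> {..<n}" by (auto simp: pairs_def)
  then show ?thesis by (rule finite_subset) auto
qed

lemma pairs_ne: "n \<ge> 2 \<Longrightarrow> pairs n \<noteq> {}"
proof -
  assume "n \<ge> 2"
  then have "(0,1) \<in> pairs n" by (simp add: pairs_def)
  then show ?thesis by blast
qed

lemma card_pairs: "card (pairs n) = n * (n - 1)"
proof -
  have "pairs n = Sigma {..<n} (\<lambda>i. {..<n} - {i})" by (auto simp: pairs_def)
  then have "card (pairs n) = (\<Sum>i<n. card ({..<n} - {i}))" by (simp add: card_SigmaI)
  also have "\<dots> = (\<Sum>i<n. n - 1)" by (rule sum.cong) auto
  finally show ?thesis by simp
qed

definition Hit :: "nat \<Rightarrow> config list set" where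
  "Hit n = {tr. \<exists>t<length tr. x2 n (tr ! t) = 0}"

lemma Cons_Hit: "Cons c -` Hit n = (if x2 n c = 0 then UNIV else Hit n)"
proof -
  have "(\<exists>t<Suc (length tr). x2 n ((c#tr) ! t) = 0) \<longleftrightarrow> x2 n c = 0 \<or> (\<exists>t<length tr. x2 n (tr ! t) = 0)" for tr
    by (auto simp: less_Suc_eq_0_disj)
  then show ?thesis by (auto simp: Hit_def)
qed

lemma prob_bind_set:
  assumes "finite S" "S \<noteq> {}"
  shows "measure_pmf.prob (bind_pmf (pmf_of_set S) g) A = (\<Sum>x\<in>S. measure_pmf.prob (g x) A) / card S"
proof -
  have "emeasure (measure_pmf (bind_pmf (pmf_of_set S) g)) A = (\<Sum>x\<in>S. emeasure (measure_pmf (g x)) A) / card S"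
    using assms by (simp add: nn_integral_pmf_of_set)
  also have "\<dots> = ennreal ((\<Sum>x\<in>S. measure_pmf.prob (g x) A) / card S)"
    using assms by (simp add: measure_pmf.emeasure_eq_measure sum_nonneg ennreal_of_nat_eq_real_of_nat divide_ennreal card_gt_0_iff)
  finally show ?thesis
    by (simp add: measure_pmf.emeasure_eq_measure sum_nonneg)
qed

lemma count_Suc: "count (Suc n) s c = count n s c + (if c n = s then 1 else 0)"
proof -
  have "{i. i < Suc n \<and> c i = s} = {i. i < n \<and> c i = s} \<union> (if c n = s then {n} else {})"
    by (auto simp: less_Suc_eq)
  then show ?thesis by (simp add: count_def)
qed

lemma count_0[simp]: "count 0 s c = 0"
  by (simp add: count_def)

lemma count_cong: "(\<And>k. k < n \<Longrightarrow> c k = d k) \<Longrightarrow> count n s c = count n s d"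
  unfolding count_def by (rule arg_cong[where f=card]) auto

lemma count_upd: "i < n \<Longrightarrow>
   count n s (c(i:=v)) + (if c i = s then 1 else 0) = count n s c + (if v = s then 1 else 0)"
proof (induction n)
  case 0 then show ?case by simp
next
  case (Suc n)
  show ?case
  proof (cases "i = n")
    case True
    have "count n s (c(i:=v)) = count n s c" by (rule count_cong) (use True in auto)
    then show ?thesis using True by (simp add: count_Suc fun_upd_same del: fun_upd_apply)
  next
    case False
    then have "i < n" using Suc by simp
    then show ?thesis using Suc.IH False by (simp add: count_Suc)
  qed
qed

lemma count_sum: "x1 n c + x2 n c + und n c = n"
proof (induction n)
  case 0 then show ?case by simp
next
  case (Suc n) then show ?case by (cases "c n") (auto simp: count_Suc)
qed

lemma sum_by_op: "(\<Sum>j<n. g (c j)) = real (x1 n c) * g Op1 + real (x2 n c) * g Op2 + real (und n c) * g Undec"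
proof (induction n)
  case 0 then show ?case by simp
next
  case (Suc n) then show ?case by (cases "c n") (auto simp: count_Suc algebra_simps)
qed

definition PH :: "nat \<Rightarrow> nat \<Rightarrow> config \<Rightarrow> real" where
  "PH n k c = measure_pmf.prob (usd_run n 1 k c) (Hit n)"

lemma PH_0: "PH n 0 c = (if x2 n c = 0 then 1 else 0)"
  by (simp add: PH_def Hit_def)

lemma PH_Suc: assumes "n \<ge> 2"
  shows "PH n (Suc k) c = (if x2 n c = 0 then 1 else
     (\<Sum>x\<in>pairs n. PH n k (upd c x)) / card (pairs n))"
proof -
  have "usd_run n 1 (Suc k) c = bind_pmf (pmf_of_set (pairs n)) (\<lambda>x. map_pmf (Cons c) (usd_run n 1 k (upd c x)))"
    by (simp add: step1 bind_map_pmf)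
  then have "PH n (Suc k) c = (\<Sum>x\<in>pairs n. measure_pmf.prob (usd_run n 1 k (upd c x)) (Cons c -` Hit n)) / card (pairs n)"
    using assms by (simp add: PH_def prob_bind_set pairs_fin pairs_ne)
  then show ?thesis
    using assms pairs_fin[of n] pairs_ne[of n] by (auto simp: Cons_Hit PH_def card_gt_0_iff)
qed

lemma mul_neg_aux: "(d::real) > 0 \<Longrightarrow> X * d = - Y \<Longrightarrow> Y \<ge> 0 \<Longrightarrow> X \<le> 0"
  by (metis mult_le_0_iff neg_le_0_iff_le not_less)

lemma drift_real:
  fixes x y z D g0 g1 f :: real
  assumes x0: "x \<ge> 0" "y \<ge> 0" "z \<ge> 0"
  and D: "D = (x+y+z+3)*(x+y+z+2)"
  and g0: "g0 * ((x+1)*(y+z+2)) = D"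
  and g1: "g1 * ((x+2)*(y+z+1)) = D"
  and f: "f * ((x+1)*(x+2)) = D"
  shows "-(x+1)*(y+1)*g0 + (z+1)*(x+1)*((-(x+y+z+3) - f) + (g1 - g0)*(y+1)) + (z+1)*(y+1)*g0 + D \<le> 0"
proof -
  define den where "den = (x+1)*(y+z+2)*(x+2)*(y+z+1)*(x+y+z+2)"
  define C where "C = 4*z + 4*z^2 + z^3 + 4*y*z + 2*y*z^2 + y^2*z + 2*x + 12*x*z + 8*x*z^2 + x*z^3 + 6*x*y + 13*x*y*z + 3*x*y*z^2 + 5*x*y^2 + 3*x*y^2*z + x*y^3 + x^2 + 8*x^2*z + 4*x^2*z^2 + 4*x^2*y + 7*x^2*y*z + 3*x^2*y^2 + 2*x^3*z + x^3*z^2 + x^3*y + 2*x^3*y*z + x^3*y^2"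
  have den0: "den > 0" unfolding den_def using x0 by simp
  have C0: "C \<ge> 0" unfolding C_def using x0
    by (intro add_nonneg_nonneg mult_nonneg_nonneg zero_le_power) simp_all
  have Y0: "D * (z+1) * C \<ge> 0" using C0 x0 D by simp
  have "(-(x+1)*(y+1)*g0 + (z+1)*(x+1)*((-(x+y+z+3) - f) + (g1 - g0)*(y+1)) + (z+1)*(y+1)*g0 + D) * den
     = - (D * (z+1) * C)"
    unfolding den_def C_def using g0 g1 f D by algebra
  from mul_neg_aux[OF den0 this Y0] show ?thesis .
qed

definition DD :: "nat \<Rightarrow> real" where "DD n = real n * (real n - 1)"
definition GG :: "nat \<Rightarrow> nat \<Rightarrow> real" where "GG n a = DD n / (real a * (real n - real a))"
definition FF :: "nat \<Rightarrow> nat \<Rightarrow> real" where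
  "FF n a = real n * (real n - 1 - real a) + DD n * (1 / real a - 1 / (real n - 1))"
definition Phi :: "nat \<Rightarrow> nat \<Rightarrow> nat \<Rightarrow> real" where
  "Phi n a b = (if b = 0 then 0 else FF n a + GG n a * real b)"

lemma FF_nonneg: assumes "1 \<le> a" "a + 1 \<le> n" shows "FF n a \<ge> 0"
proof -
  have "real a \<le> real n - 1" using assms by simp
  then have "1 / real a \<ge> 1 / (real n - 1)" using assms by (intro divide_left_mono) auto
  moreover have "DD n \<ge> 0" using assms by (simp add: DD_def)
  moreover have "real n - 1 - real a \<ge> 0" using assms by simp
  ultimately show ?thesis unfolding FF_def by (simp add: mult_nonneg_nonneg)
qed

lemma FF_step: assumes "1 \<le> a" "a + 2 \<le> n"
  shows "FF n (a+1) - FF n a = - real n - DD n / (real a * (real a + 1))"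
proof -
  have "1 / real (a+1) - 1 / real a = - 1 / (real a * (real a + 1))" using assms by (simp add: field_simps)
  have "DD n * (1 / real (a+1) - 1 / (real n - 1)) - DD n * (1 / real a - 1 / (real n - 1))
      = DD n * (1 / real (a+1) - 1 / real a)"
    by (simp add: algebra_simps)
  also have "\<dots> = - DD n / (real a * (real a + 1))" using \<open>1 / real (a+1) - 1 / real a = _\<close> by simp
  finally have "DD n * (1 / real (a+1) - 1 / (real n - 1)) - DD n * (1 / real a - 1 / (real n - 1))
      = - DD n / (real a * (real a + 1))" .
  then show ?thesis unfolding FF_def by (simp add: algebra_simps)
qed

lemma drift_nat:
  assumes a1: "a \<ge> 1" and b1: "b \<ge> 1" and n: "a + b + u = n"
  shows "real b * real a * (Phi n a (b-1) - Phi n a b) + real u * (real a * (Phi n (a+1) b - Phi n a b)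
     + real b * (Phi n a (b+1) - Phi n a b)) \<le> - DD n"
proof -
  have Pab: "Phi n a b = FF n a + GG n a * real b" using b1 by (simp add: Phi_def)
  have Pab1: "Phi n a (b+1) = FF n a + GG n a * (real b + 1)" by (simp add: Phi_def)
  have h1: "Phi n a (b-1) \<le> FF n a + GG n a * (real b - 1)"
  proof (cases "b = 1")
    case True
    then show ?thesis using FF_nonneg[of a n] a1 n by (simp add: Phi_def)
  next
    case False
    then show ?thesis using b1 by (simp add: Phi_def of_nat_diff)
  qed
  have ab: "real b * real a \<ge> 0" by simp
  have t1: "real b * real a * (Phi n a (b-1) - Phi n a b) \<le> - real b * real a * GG n a"
    using mult_left_mono[OF h1 ab] unfolding Pab by (simp add: algebra_simps)
  show ?thesis
  proof (cases "u = 0")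
    case True
    then have "real n - real a = real b" using n by simp
    then have "real b * real a * GG n a = DD n" using a1 b1 by (simp add: GG_def)
    then show ?thesis using t1 True by simp
  next
    case False
    define x where "x = real a - 1"
    define y where "y = real b - 1"
    define z where "z = real u - 1"
    have x0: "x \<ge> 0" "y \<ge> 0" "z \<ge> 0" using a1 b1 False by (auto simp: x_def y_def z_def)
    have ra: "real a = x + 1" "real b = y + 1" "real u = z + 1" "real n = x + y + z + 3"
      using n by (auto simp: x_def y_def z_def)
    have Pa1: "Phi n (a+1) b = FF n (a+1) + GG n (a+1) * real b" using b1 by (simp add: Phi_def)
    have fs: "FF n (a+1) - FF n a = - real n - DD n / (real a * (real a + 1))"
      using FF_step[of a n] a1 b1 n False by simp
    have D: "DD n = (x+y+z+3)*(x+y+z+2)" unfolding DD_def ra by simp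
    have da: "real a * (real n - real a) = (x+1)*(y+z+2)" using ra by (simp add: algebra_simps)
    have da1: "real (a+1) * (real n - real (a+1)) = (x+2)*(y+z+1)" using ra by (simp add: algebra_simps)
    have p1: "(x+1)*(y+z+2) > 0" "(x+2)*(y+z+1) > 0" using x0 by simp_all
    have g0: "GG n a * ((x+1)*(y+z+2)) = DD n"
      unfolding GG_def da using p1 x0 by simp
    have g1: "GG n (a+1) * ((x+2)*(y+z+1)) = DD n"
      unfolding GG_def da1 using p1 x0 by simp
    have fa: "real a * (real a + 1) = (x+1)*(x+2)" using ra by (simp add: algebra_simps)
    have "(x+1)*(x+2) > 0" using x0 by simp
    then have f: "(DD n / (real a * (real a + 1))) * ((x+1)*(x+2)) = DD n"
      unfolding fa using x0 by simp
    note main = drift_real[OF x0 D g0 g1 f]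
    define q where "q = DD n / (real a * (real a + 1))"
    have d1: "Phi n (a+1) b - Phi n a b = (- real n - q) + (GG n (a+1) - GG n a) * real b"
      unfolding Pa1 Pab using fs unfolding q_def by (simp add: left_diff_distrib)
    have d2: "Phi n a (b+1) - Phi n a b = GG n a" unfolding Pab1 Pab by (simp add: algebra_simps)
    have eq: "real u * (real a * (Phi n (a+1) b - Phi n a b) + real b * (Phi n a (b+1) - Phi n a b))
       = (z+1)*(x+1)*((-(x+y+z+3) - q) + (GG n (a+1) - GG n a)*(y+1)) + (z+1)*(y+1)*GG n a"
      unfolding d1 d2 ra by (simp add: algebra_simps)
    have t1': "real b * real a * (Phi n a (b-1) - Phi n a b) \<le> -(x+1)*(y+1)*GG n a"
      using t1 unfolding ra by (simp add: algebra_simps)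
    show ?thesis using t1' eq main unfolding q_def by linarith
  qed
qed

definition PhiC :: "nat \<Rightarrow> config \<Rightarrow> real" where
  "PhiC n c = Phi n (x1 n c) (x2 n c)"

definition hh :: "nat \<Rightarrow> nat \<Rightarrow> nat \<Rightarrow> opinion \<Rightarrow> opinion \<Rightarrow> real" where
  "hh n a b s t = (if s = Op2 \<and> t = Op1 then Phi n a (b-1) - Phi n a b
     else if s = Undec \<and> t = Op1 then Phi n (a+1) b - Phi n a b
     else if s = Undec \<and> t = Op2 then Phi n a (b+1) - Phi n a b else 0)"

lemma count_upd_same: "i < n \<Longrightarrow> c i = s \<Longrightarrow> v \<noteq> s \<Longrightarrow> count n s (c(i:=v)) = count n s c - 1"
  using count_upd[of i n s c v] by simp

lemma count_upd_new: "i < n \<Longrightarrow> c i \<noteq> s \<Longrightarrow> v = s \<Longrightarrow> count n s (c(i:=v)) = count n s c + 1"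
  using count_upd[of i n s c v] by simp

lemma count_upd_other: "i < n \<Longrightarrow> c i \<noteq> s \<Longrightarrow> v \<noteq> s \<Longrightarrow> count n s (c(i:=v)) = count n s c"
  using count_upd[of i n s c v] by simp

lemma PhiC_upd:
  assumes "(i,j) \<in> pairs n"
  shows "PhiC n (upd c (i,j)) = Phi n (x1 n c) (x2 n c) + hh n (x1 n c) (x2 n c) (c i) (c j)"
proof -
  have i: "i < n" using assms by (simp add: pairs_def)
  show ?thesis
  proof (cases "c i")
    case Op1
    then show ?thesis by (cases "c j") (simp_all add: upd_def PhiC_def hh_def)
  next
    case Op2
    then show ?thesis
      by (cases "c j") (simp_all add: upd_def PhiC_def hh_def i count_upd_same count_upd_other)
  next
    case Undec
    then show ?thesis
      by (cases "c j") (simp_all add: upd_def PhiC_def hh_def i count_upd_new count_upd_other fun_upd_idem)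
  qed
qed

lemma x1_upd:
  assumes "(i,j) \<in> pairs n"
  shows "x1 n (upd c (i,j)) \<ge> x1 n c"
proof -
  have i: "i < n" using assms by (simp add: pairs_def)
  show ?thesis
    by (cases "c i"; cases "c j") (simp_all add: upd_def i count_upd_new count_upd_other fun_upd_idem)
qed

lemma sum_pairs:
  assumes "\<And>i. f i i = 0"
  shows "(\<Sum>x\<in>pairs n. f (fst x) (snd x)) = (\<Sum>i<n. \<Sum>j<n. f i j)"
proof -
  have "(\<Sum>i<n. \<Sum>j<n. f i j) = (\<Sum>x\<in>{..<n} \<times> {..<n}. f (fst x) (snd x))"
    by (simp add: sum.cartesian_product case_prod_beta)
  also have "\<dots> = (\<Sum>x\<in>pairs n. f (fst x) (snd x))"
    by (rule sum.mono_neutral_right) (auto simp: pairs_def assms)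
  finally show ?thesis by simp
qed

lemma sum_PhiC:
  fixes n :: nat and c :: config
  assumes "n \<ge> 2"
  defines "a \<equiv> x1 n c" and "b \<equiv> x2 n c" and "u \<equiv> und n c"
  shows "(\<Sum>x\<in>pairs n. PhiC n (upd c x)) = DD n * Phi n a b + real b * real a * (Phi n a (b-1) - Phi n a b)
     + real u * (real a * (Phi n (a+1) b - Phi n a b) + real b * (Phi n a (b+1) - Phi n a b))"
proof -
  have "(\<Sum>x\<in>pairs n. PhiC n (upd c x)) = (\<Sum>x\<in>pairs n. Phi n a b + hh n a b (c (fst x)) (c (snd x)))"
    by (rule sum.cong) (auto simp: PhiC_upd a_def b_def)
  also have "\<dots> = real (card (pairs n)) * Phi n a b + (\<Sum>x\<in>pairs n. hh n a b (c (fst x)) (c (snd x)))"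
    by (simp add: sum.distrib)
  also have "(\<Sum>x\<in>pairs n. hh n a b (c (fst x)) (c (snd x))) = (\<Sum>i<n. \<Sum>j<n. hh n a b (c i) (c j))"
    by (rule sum_pairs) (auto simp: hh_def)
  also have "\<dots> = (\<Sum>i<n. real a * hh n a b (c i) Op1 + real b * hh n a b (c i) Op2 + real u * hh n a b (c i) Undec)"
    by (simp add: sum_by_op a_def b_def u_def)
  also have "\<dots> = real a * (real a * hh n a b Op1 Op1 + real b * hh n a b Op1 Op2 + real u * hh n a b Op1 Undec)
      + real b * (real a * hh n a b Op2 Op1 + real b * hh n a b Op2 Op2 + real u * hh n a b Op2 Undec)
      + real u * (real a * hh n a b Undec Op1 + real b * hh n a b Undec Op2 + real u * hh n a b Undec Undec)"
    by (subst sum_by_op[where g = "\<lambda>s. real a * hh n a b s Op1 + real b * hh n a b s Op2 + real u * hh n a b s Undec"])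
       (simp add: a_def b_def u_def)
  also have "real (card (pairs n)) = DD n" using assms(1) by (simp add: card_pairs DD_def of_nat_diff)
  finally show ?thesis by (simp add: hh_def algebra_simps)
qed

definition NH :: "nat \<Rightarrow> nat \<Rightarrow> config \<Rightarrow> real" where
  "NH n k c = 1 - PH n k c"

definition Av :: "nat \<Rightarrow> config \<Rightarrow> (config \<Rightarrow> real) \<Rightarrow> real" where
  "Av n c f = (\<Sum>x\<in>pairs n. f (upd c x)) / real (card (pairs n))"

lemma PH_bounds: "0 \<le> PH n k c" "PH n k c \<le> 1"
  by (simp_all add: PH_def)

lemma NH_bounds: "0 \<le> NH n k c" "NH n k c \<le> 1"
  using PH_bounds[of n k c] by (simp_all add: NH_def)

lemma NH_0: "NH n 0 c = (if x2 n c = 0 then 0 else 1)"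
  by (simp add: NH_def PH_0)

lemma card_pairs_pos: "n \<ge> 2 \<Longrightarrow> real (card (pairs n)) > 0"
  using pairs_fin[of n] pairs_ne[of n] by (simp add: card_gt_0_iff)

lemma NH_Suc: assumes "n \<ge> 2"
  shows "NH n (Suc k) c = (if x2 n c = 0 then 0 else Av n c (NH n k))"
proof (cases "x2 n c = 0")
  case True then show ?thesis using assms by (simp add: NH_def PH_Suc)
next
  case False
  have cp: "real (card (pairs n)) > 0" using card_pairs_pos[OF assms] .
  have "Av n c (NH n k) = (real (card (pairs n)) - (\<Sum>x\<in>pairs n. PH n k (upd c x))) / real (card (pairs n))"
    by (simp add: Av_def NH_def sum_subtractf)
  also have "\<dots> = 1 - (\<Sum>x\<in>pairs n. PH n k (upd c x)) / real (card (pairs n))"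
    using cp by (simp add: diff_divide_distrib)
  finally show ?thesis using False assms by (simp add: NH_def PH_Suc)
qed

lemma NH_zero: "n \<ge> 2 \<Longrightarrow> x2 n c = 0 \<Longrightarrow> NH n k c = 0"
  by (cases k) (simp_all add: NH_0 NH_Suc)

lemma Av_mono: "(\<And>x. x \<in> pairs n \<Longrightarrow> f (upd c x) \<le> g (upd c x)) \<Longrightarrow> Av n c f \<le> Av n c g"
  unfolding Av_def by (intro divide_right_mono sum_mono) auto

lemma Av_const: "n \<ge> 2 \<Longrightarrow> Av n c (\<lambda>_. K) = K"
  using card_pairs_pos[of n] by (simp add: Av_def)

lemma Av_sum: "Av n c (\<lambda>d. \<Sum>j\<in>J. f j d) = (\<Sum>j\<in>J. Av n c (f j))"
  unfolding Av_def by (simp add: sum.swap[of _ J] sum_divide_distrib)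

lemma Av_cmult: "Av n c (\<lambda>d. K * f d) = K * Av n c f"
  unfolding Av_def by (simp add: sum_distrib_left)

lemma NH_Suc_le: assumes "n \<ge> 2" shows "NH n (Suc k) c \<le> NH n k c"
proof (induction k arbitrary: c)
  case 0
  show ?case
  proof (cases "x2 n c = 0")
    case True then show ?thesis using assms by (simp add: NH_Suc NH_0)
  next
    case False
    have "Av n c (NH n 0) \<le> Av n c (\<lambda>_. 1)" by (rule Av_mono) (simp add: NH_bounds)
    then show ?thesis using False assms by (simp add: NH_Suc NH_0 Av_const)
  qed
next
  case (Suc k)
  show ?case
  proof (cases "x2 n c = 0")
    case True then show ?thesis using assms by (simp add: NH_Suc)
  next
    case False
    have "Av n c (NH n (Suc k)) \<le> Av n c (NH n k)" by (rule Av_mono) (rule Suc.IH)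
    then show ?thesis using False assms by (simp add: NH_Suc)
  qed
qed

lemma NH_mono: assumes "n \<ge> 2" "k \<le> k'" shows "NH n k' c \<le> NH n k c"
  using lift_Suc_antimono_le[of "\<lambda>k. NH n k c", OF NH_Suc_le[OF assms(1)] assms(2)] .

lemma drift:
  assumes "n \<ge> 2" "x1 n c \<ge> 1" "x2 n c \<ge> 1"
  shows "Av n c (PhiC n) \<le> PhiC n c - 1"
proof -
  define a where "a = x1 n c"
  define b where "b = x2 n c"
  define u where "u = und n c"
  have abu: "a + b + u = n" using count_sum[of n c] by (simp add: a_def b_def u_def)
  have dn: "real b * real a * (Phi n a (b-1) - Phi n a b) + real u * (real a * (Phi n (a+1) b - Phi n a b)
     + real b * (Phi n a (b+1) - Phi n a b)) \<le> - DD n"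
    using drift_nat[OF _ _ abu] assms by (simp add: a_def b_def)
  have cp: "real (card (pairs n)) = DD n" using assms(1) by (simp add: card_pairs DD_def of_nat_diff)
  have DD0: "DD n > 0" using card_pairs_pos[OF assms(1)] cp by simp
  have "Av n c (PhiC n) = (DD n * Phi n a b + real b * real a * (Phi n a (b-1) - Phi n a b)
     + real u * (real a * (Phi n (a+1) b - Phi n a b) + real b * (Phi n a (b+1) - Phi n a b))) / DD n"
    unfolding Av_def cp using sum_PhiC[OF assms(1), of c] by (simp add: a_def b_def u_def)
  also have "\<dots> \<le> (DD n * Phi n a b - DD n) / DD n"
    using dn DD0 by (intro divide_right_mono) auto
  also have "\<dots> = PhiC n c - 1" using DD0 by (simp add: PhiC_def a_def b_def field_simps)
  finally show ?thesis .
qed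

definition invc :: "nat \<Rightarrow> config \<Rightarrow> bool" where "invc n c \<longleftrightarrow> x1 n c \<ge> 1"

lemma inv_upd: "invc n c \<Longrightarrow> x \<in> pairs n \<Longrightarrow> invc n (upd c x)"
  unfolding invc_def using x1_upd[of "fst x" "snd x" n c] by auto

lemma Phi_ge1: assumes "1 \<le> a" "1 \<le> b" "a + b \<le> n" shows "Phi n a b \<ge> 1"
proof -
  have p: "real a * (real n - real a) > 0" using assms by simp
  have "real a * (real n - real a) \<le> (real n - 1) * real n"
    using assms by (intro mult_mono) auto
  then have "real a * (real n - real a) \<le> DD n" by (simp add: DD_def mult.commute)
  then have g: "GG n a \<ge> 1" unfolding GG_def using p by (simp add: le_divide_eq)
  have "GG n a * real b \<ge> 1 * 1" using g assms by (intro mult_mono) auto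
  moreover have "FF n a \<ge> 0" using FF_nonneg[of a n] assms by simp
  ultimately show ?thesis using assms by (simp add: Phi_def)
qed

lemma PhiC_ge1: "invc n c \<Longrightarrow> x2 n c \<ge> 1 \<Longrightarrow> PhiC n c \<ge> 1"
  unfolding PhiC_def invc_def using count_sum[of n c] by (intro Phi_ge1) auto

lemma PhiC_nonneg: "invc n c \<Longrightarrow> PhiC n c \<ge> 0"
proof (cases "x2 n c = 0")
  case True then show ?thesis by (simp add: PhiC_def Phi_def)
next
  case False
  assume "invc n c"
  then show ?thesis using PhiC_ge1[of n c] False by simp
qed

lemma additive:
  assumes "n \<ge> 2"
  shows "invc n c \<Longrightarrow> (\<Sum>j\<le>k. NH n j c) \<le> PhiC n c"
proof (induction k arbitrary: c)
  case 0
  then show ?case using assms PhiC_nonneg[of n c] PhiC_ge1[of n c] by (simp add: NH_0 Suc_le_eq)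
next
  case (Suc k)
  show ?case
  proof (cases "x2 n c = 0")
    case True
    have "(\<Sum>j\<le>Suc k. NH n j c) = 0" using NH_zero[OF assms True] by simp
    then show ?thesis using PhiC_nonneg[OF Suc.prems] by simp
  next
    case False
    have "(\<Sum>j\<le>Suc k. NH n j c) = NH n 0 c + (\<Sum>j\<le>k. NH n (Suc j) c)"
      by (simp only: sum.atMost_Suc_shift)
    also have "\<dots> = 1 + Av n c (\<lambda>d. \<Sum>j\<le>k. NH n j d)"
      using False assms by (simp add: NH_0 NH_Suc Av_sum)
    also have "\<dots> \<le> 1 + Av n c (PhiC n)"
      by (simp, rule Av_mono) (use Suc.IH inv_upd[OF Suc.prems] in auto)
    also have "\<dots> \<le> PhiC n c"
      using drift[OF assms, of c] Suc.prems False by (simp add: invc_def)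
    finally show ?thesis .
  qed
qed

lemma markov:
  assumes "n \<ge> 2" "invc n c"
  shows "real (Suc k) * NH n k c \<le> PhiC n c"
proof -
  have "real (Suc k) * NH n k c = (\<Sum>j\<le>k. NH n k c)" by simp
  also have "\<dots> \<le> (\<Sum>j\<le>k. NH n j c)" by (intro sum_mono NH_mono[OF assms(1)]) auto
  also have "\<dots> \<le> PhiC n c" by (rule additive[OF assms])
  finally show ?thesis .
qed

lemma amplify:
  assumes "n \<ge> 2" and B: "\<And>d. invc n d \<Longrightarrow> NH n m d \<le> B"
  shows "invc n c \<Longrightarrow> NH n (k + m) c \<le> NH n k c * B"
proof (induction k arbitrary: c)
  case 0
  show ?case
  proof (cases "x2 n c = 0")
    case True then show ?thesis using NH_zero[OF assms(1) True] by (simp add: NH_0)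
  next
    case False then show ?thesis using B[OF 0] by (simp add: NH_0)
  qed
next
  case (Suc k)
  show ?case
  proof (cases "x2 n c = 0")
    case True then show ?thesis using NH_zero[OF assms(1) True] by simp
  next
    case False
    have "NH n (Suc k + m) c = Av n c (NH n (k + m))" using False assms(1) by (simp add: NH_Suc)
    also have "\<dots> \<le> Av n c (\<lambda>d. B * NH n k d)"
      by (rule Av_mono) (use Suc.IH inv_upd[OF Suc.prems] in \<open>auto simp: mult.commute\<close>)
    also have "\<dots> = NH n (Suc k) c * B" using False assms(1) by (simp add: Av_cmult NH_Suc)
    finally show ?thesis .
  qed
qed

definition MM :: "nat \<Rightarrow> real" where "MM n = 3 * real n ^ 2 - 5 * real n"

lemma MM_nonneg: "n \<ge> 2 \<Longrightarrow> MM n \<ge> 0"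
proof -
  assume "n \<ge> 2"
  then have "real n \<ge> 2" by simp
  then have "3 * real n * real n \<ge> 5 * real n" by (intro mult_right_mono) auto
  then show ?thesis by (simp add: MM_def power2_eq_square)
qed

lemma Phi_le: assumes "1 \<le> a" "1 \<le> b" "a + b \<le> n" shows "Phi n a b \<le> MM n"
proof -
  have n2: "real n \<ge> 2" using assms by simp
  have DD: "DD n = real n * (real n - 1)" by (simp add: DD_def)
  have p: "real a * (real n - real a) > 0" using assms by simp
  have "real b \<le> real a * (real n - real a)"
  proof -
    have "real b \<le> real n - real a" using assms by simp
    also have "\<dots> = 1 * (real n - real a)" by simp
    also have "\<dots> \<le> real a * (real n - real a)" by (rule mult_right_mono) (use assms in auto)
    finally show ?thesis .
  qed
  then have "real b / (real a * (real n - real a)) \<le> 1" using p by simp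
  note b1 = this
  have D0: "DD n \<ge> 0" using n2 by (simp add: DD)
  have "GG n a * real b = DD n * (real b / (real a * (real n - real a)))" by (simp add: GG_def)
  also have "\<dots> \<le> DD n * 1" by (rule mult_left_mono[OF b1 D0])
  finally have g: "GG n a * real b \<le> DD n" by simp
  have f1: "real n * (real n - 1 - real a) \<le> real n * (real n - 2)" using assms by (intro mult_left_mono) auto
  have f2: "1 / real a - 1 / (real n - 1) \<le> 1 - 1 / (real n - 1)" using assms by simp
  have f3: "DD n * (1 / real a - 1 / (real n - 1)) \<le> DD n * (1 - 1 / (real n - 1))"
    using f2 n2 by (intro mult_left_mono) (auto simp: DD)
  have f4: "DD n * (1 - 1 / (real n - 1)) = DD n - real n" using n2 by (simp add: DD field_simps)
  have "FF n a \<le> real n * (real n - 2) + DD n - real n" using f1 f3 f4 by (simp add: FF_def)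
  then show ?thesis using g assms by (simp add: Phi_def MM_def DD power2_eq_square algebra_simps)
qed

lemma PhiC_le: "n \<ge> 2 \<Longrightarrow> invc n c \<Longrightarrow> PhiC n c \<le> MM n"
proof (cases "x2 n c = 0")
  case True
  assume "n \<ge> 2" then show ?thesis using True MM_nonneg by (simp add: PhiC_def Phi_def)
next
  case False
  assume "invc n c"
  then show ?thesis using False count_sum[of n c] unfolding PhiC_def invc_def by (intro Phi_le) auto
qed

lemma block: assumes "n \<ge> 2" "invc n d" shows "NH n L d \<le> MM n / real (Suc L)"
proof -
  have "real (Suc L) * NH n L d \<le> MM n" using markov[OF assms, of L] PhiC_le[OF assms] by linarith
  then show ?thesis by (simp add: field_simps)
qed

lemma pow_bound: assumes "n \<ge> 2" shows "invc n c \<Longrightarrow> NH n (j * L) c \<le> (MM n / real (Suc L)) ^ j"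
proof (induction j arbitrary: c)
  case 0 then show ?case by (simp add: NH_bounds)
next
  case (Suc j)
  have B0: "MM n / real (Suc L) \<ge> 0" using MM_nonneg[OF assms] by simp
  have "NH n (Suc j * L) c = NH n (j * L + L) c" by (simp add: add.commute)
  also have "\<dots> \<le> NH n (j * L) c * (MM n / real (Suc L))"
    by (rule amplify[OF assms block[OF assms]]) (use Suc.prems in auto)
  also have "\<dots> \<le> (MM n / real (Suc L)) ^ j * (MM n / real (Suc L))"
    by (rule mult_right_mono[OF Suc.IH[OF Suc.prems] B0])
  also have "\<dots> = (MM n / real (Suc L)) ^ Suc j" by (simp only: power_Suc2)
  finally show ?case .
qed

lemma inv_init: "n \<ge> 2 \<Longrightarrow> invc n init_conf"
proof -
  assume "n \<ge> 2"
  then have "{i. i < n \<and> init_conf i = Op1} = {0}" by (auto simp: init_conf_def split: if_splits)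
  then show ?thesis by (simp add: invc_def count_def)
qed

lemma main_bound: assumes "n \<ge> 2" "j * L \<le> N"
  shows "PH n N init_conf \<ge> 1 - (MM n / real (Suc L)) ^ j"
proof -
  have "NH n N init_conf \<le> NH n (j * L) init_conf" by (rule NH_mono[OF assms])
  also have "\<dots> \<le> (MM n / real (Suc L)) ^ j" by (rule pow_bound[OF assms(1) inv_init[OF assms(1)]])
  finally show ?thesis by (simp add: NH_def)
qed

lemma generic:
  fixes n j :: nat and q :: real
  assumes n: "n \<ge> 2" and q: "0 < q" "q \<le> ln (real n)" and qq: "1 < 7 * real n ^ 2 * q ^ 2" and j: "j \<ge> 1"
  and cond: "(MM n * real j / (7 * real n ^ 2 * q ^ 2 - 1)) ^ j \<le> 1 / real n ^ 2"
  shows "PH n (nat \<lfloor>7 * real n ^ 2 * (ln (real n)) ^ 2\<rfloor>) init_conf \<ge> 1 - 1 / real n ^ 2"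
proof -
  define N where "N = nat \<lfloor>7 * real n ^ 2 * (ln (real n)) ^ 2\<rfloor>"
  define L where "L = N div j"
  have jL: "j * L \<le> N" unfolding L_def by simp
  have "q ^ 2 \<le> (ln (real n)) ^ 2" using q by (intro power_mono) auto
  then have X: "7 * real n ^ 2 * q ^ 2 \<le> 7 * real n ^ 2 * (ln (real n)) ^ 2" by (intro mult_left_mono) auto
  have "real N > 7 * real n ^ 2 * (ln (real n)) ^ 2 - 1"
  proof -
    have "0 \<le> 7 * real n ^ 2 * (ln (real n)) ^ 2" by simp
    then have "real N = real_of_int \<lfloor>7 * real n ^ 2 * (ln (real n)) ^ 2\<rfloor>" unfolding N_def by simp
    then show ?thesis by linarith
  qed
  with X have NX: "real N > 7 * real n ^ 2 * q ^ 2 - 1" by linarith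
  have "real N < real j * real (Suc L)"
  proof -
    have m: "N mod j < j" using j by simp
    have "N = j * L + N mod j" unfolding L_def by simp
    then have "N < j * Suc L" using m by simp
    then show ?thesis by (metis of_nat_less_iff of_nat_mult)
  qed
  with NX have SL: "7 * real n ^ 2 * q ^ 2 - 1 < real j * real (Suc L)" by linarith
  have M0: "MM n \<ge> 0" using MM_nonneg[OF n] .
  have pos: "7 * real n ^ 2 * q ^ 2 - 1 > 0" using qq by simp
  have r: "MM n / real (Suc L) \<le> MM n * real j / (7 * real n ^ 2 * q ^ 2 - 1)"
  proof -
    have "MM n / real (Suc L) = MM n * real j / (real j * real (Suc L))" using j by simp
    also have "\<dots> \<le> MM n * real j / (7 * real n ^ 2 * q ^ 2 - 1)"
      using SL pos M0 by (intro divide_left_mono) auto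
    finally show ?thesis .
  qed
  have "(MM n / real (Suc L)) ^ j \<le> (MM n * real j / (7 * real n ^ 2 * q ^ 2 - 1)) ^ j"
    using r M0 by (intro power_mono) auto
  with cond have "(MM n / real (Suc L)) ^ j \<le> 1 / real n ^ 2" by linarith
  with main_bound[OF n jL] show ?thesis unfolding N_def by linarith
qed

lemma l2: "ln (2::real) \<ge> 693/1000"
  using ln_approx_bounds[of 2 3] by (simp add: eval_nat_numeral)

lemma l3: "ln (3::real) \<ge> 1098/1000"
  using ln_approx_bounds[of 3 5] by (simp add: eval_nat_numeral)

lemma l54: "ln (5/4::real) \<ge> 223/1000"
  using ln_approx_bounds[of "5/4" 2] by (simp add: eval_nat_numeral)

lemma l76: "ln (7/6::real) \<ge> 153/1000"
  using ln_approx_bounds[of "7/6" 1] by (simp add: eval_nat_numeral)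

lemma e1: "exp (1::real) \<le> 272/100"
proof -
  have h: "exp (1::real) < exp (ln (272/100))" using ln_272_gt_1 exp_less_cancel_iff by blast
  have "exp (ln (272/100::real)) = 272/100" by (rule exp_ln) simp
  then show ?thesis using h by linarith
qed

lemma lns: "ln (4::real) \<ge> 1386/1000" "ln (5::real) \<ge> 1609/1000" "ln (6::real) \<ge> 1791/1000"
  "ln (7::real) \<ge> 1944/1000" "ln (8::real) \<ge> 2079/1000" "ln (10::real) \<ge> 2302/1000"
  "ln (14::real) \<ge> 2637/1000" "ln (16::real) \<ge> 2772/1000"
proof -
  have a4: "ln (4::real) = ln 2 + ln 2" using ln_mult[of 2 2] by simp
  have a5: "ln (5::real) = ln 4 + ln (5/4)" using ln_mult[of 4 "5/4"] by simp
  have a6: "ln (6::real) = ln 2 + ln 3" using ln_mult[of 2 3] by simp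
  have a7: "ln (7::real) = ln 6 + ln (7/6)" using ln_mult[of 6 "7/6"] by simp
  have a8: "ln (8::real) = ln 2 + ln 4" using ln_mult[of 2 4] by simp
  have a10: "ln (10::real) = ln 2 + ln 5" using ln_mult[of 2 5] by simp
  have a14: "ln (14::real) = ln 2 + ln 7" using ln_mult[of 2 7] by simp
  have a16: "ln (16::real) = ln 2 + ln 8" using ln_mult[of 2 8] by simp
  show "ln (4::real) \<ge> 1386/1000" "ln (5::real) \<ge> 1609/1000" "ln (6::real) \<ge> 1791/1000"
    "ln (7::real) \<ge> 1944/1000" "ln (8::real) \<ge> 2079/1000" "ln (10::real) \<ge> 2302/1000"
    "ln (14::real) \<ge> 2637/1000" "ln (16::real) \<ge> 2772/1000"
    using a4 a5 a6 a7 a8 a10 a14 a16 l2 l3 l54 l76 by linarith+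
qed

lemma large:
  assumes n: "n \<ge> 32"
  shows "PH n (nat \<lfloor>7 * real n ^ 2 * (ln (real n)) ^ 2\<rfloor>) init_conf \<ge> 1 - 1 / real n ^ 2"
proof -
  define x where "x = ln (real n)"
  have "ln (32::real) = ln 2 + ln 16" using ln_mult[of 2 16] by simp
  then have l32: "ln (32::real) \<ge> 10/3" using l2 lns(8) by linarith
  have "ln (32::real) \<le> ln (real n)" using n by simp
  then have x3: "x \<ge> 10/3" using l32 unfolding x_def by linarith
  define j where "j = nat \<lceil>2 * x\<rceil>"
  have j1: "real j \<ge> 2 * x" unfolding j_def using x3 by linarith
  have j2: "real j \<le> 2 * x + 1" unfolding j_def using x3 by linarith
  have jge: "j \<ge> 1" using j1 x3 by simp
  have n2: "real n ^ 2 \<ge> 1" using n by simp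
  have xx: "x * x \<ge> 10/3 * x" using x3 by (intro mult_right_mono) auto
  have poly: "700 * x^2 - 1632 * x - 816 \<ge> 100" using xx x3 unfolding power2_eq_square by linarith
  have "real n ^ 2 * (700 * x^2 - 1632 * x - 816) \<ge> real n ^ 2 * 100"
    using poly by (intro mult_left_mono) auto
  then have key: "272 * (3 * real n ^ 2 * (2 * x + 1)) \<le> 100 * (7 * real n ^ 2 * x ^ 2 - 1)"
    using n2 by (simp add: algebra_simps)
  have pos3: "3 * real n ^ 2 * (2 * x + 1) > 0" using x3 n by simp
  have aux: "\<And>A B :: real. 0 < A \<Longrightarrow> 272 * A \<le> 100 * B \<Longrightarrow> 0 < B" by linarith
  have P: "7 * real n ^ 2 * x ^ 2 - 1 > 0" by (rule aux[OF pos3 key])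
  have MMle: "MM n \<le> 3 * real n ^ 2" unfolding MM_def by simp
  have M0: "MM n \<ge> 0" using MM_nonneg n by simp
  have Mj: "MM n * real j \<le> 3 * real n ^ 2 * (2 * x + 1)"
    using MMle j2 M0 by (intro mult_mono) auto
  define r where "r = MM n * real j / (7 * real n ^ 2 * x ^ 2 - 1)"
  have r0: "r \<ge> 0" unfolding r_def using M0 P by simp
  have "r \<le> 3 * real n ^ 2 * (2 * x + 1) / (7 * real n ^ 2 * x ^ 2 - 1)"
    unfolding r_def using Mj P by (intro divide_right_mono) auto
  also have "\<dots> \<le> 100 / 272" using key P by (simp add: divide_le_eq)
  also have "\<dots> \<le> exp (-1)"
  proof -
    have "exp (-1::real) = 1 / exp 1" by (simp add: exp_minus field_simps)
    also have "1 / exp 1 \<ge> 1 / (272/100::real)" using e1 by (intro divide_left_mono) auto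
    finally show ?thesis by simp
  qed
  finally have r1: "r \<le> exp (-1)" .
  have "r ^ j \<le> exp (-1) ^ j" using r0 r1 by (intro power_mono) auto
  also have "\<dots> = exp (real j * (-1))" by (rule exp_of_nat_mult[symmetric])
  also have "\<dots> \<le> exp (- (2 * x))" using j1 by simp
  also have "\<dots> = 1 / real n ^ 2"
  proof -
    have "exp (2 * x) = exp x * exp x" by (simp add: exp_add[symmetric])
    also have "\<dots> = real n ^ 2" using n unfolding x_def by (simp add: power2_eq_square)
    finally show ?thesis by (simp add: exp_minus inverse_eq_divide)
  qed
  finally have cond: "r ^ j \<le> 1 / real n ^ 2" .
  have q0: "0 < x" using x3 by simp
  have qq: "1 < 7 * real n ^ 2 * x ^ 2" using P by simp
  show ?thesis using generic[OF _ q0 _ qq jge] cond n unfolding r_def x_def by simp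
qed

definition QQ :: "nat \<Rightarrow> bool" where
  "QQ n \<longleftrightarrow> 1 - 1 / real n ^ 2 \<le> PH n (nat \<lfloor>7 * real n ^ 2 * (ln (real n)) ^ 2\<rfloor>) init_conf"

lemma sm2: "QQ 2"
  unfolding QQ_def
proof (rule generic[where j = 1 and q = "693/1000"])
  have "ln (2::real) \<le> ln (real (2::nat))" by simp
  then show "693/1000 \<le> ln (real (2::nat))" using l2 by linarith
qed (simp_all add: MM_def power_divide)

lemma sm3: "QQ 3"
  unfolding QQ_def
proof (rule generic[where j = 2 and q = "1098/1000"])
  have "ln (3::real) \<le> ln (real (3::nat))" by simp
  then show "1098/1000 \<le> ln (real (3::nat))" using l3 by linarith
qed (simp_all add: MM_def power_divide)

lemma sm4: "QQ 4"
  unfolding QQ_def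
proof (rule generic[where j = 3 and q = "1386/1000"])
  have "ln (4::real) \<le> ln (real (4::nat))" by simp
  then show "1386/1000 \<le> ln (real (4::nat))" using lns(1) by linarith
qed (simp_all add: MM_def power_divide)

lemma sm5: "QQ 5"
  unfolding QQ_def
proof (rule generic[where j = 3 and q = "1609/1000"])
  have "ln (5::real) \<le> ln (real (5::nat))" by simp
  then show "1609/1000 \<le> ln (real (5::nat))" using lns(2) by linarith
qed (simp_all add: MM_def power_divide)

lemma sm6: "QQ 6"
  unfolding QQ_def
proof (rule generic[where j = 3 and q = "1791/1000"])
  have "ln (6::real) \<le> ln (real (6::nat))" by simp
  then show "1791/1000 \<le> ln (real (6::nat))" using lns(3) by linarith
qed (simp_all add: MM_def power_divide)

lemma sm7: "QQ 7"
  unfolding QQ_def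
proof (rule generic[where j = 3 and q = "1944/1000"])
  have "ln (7::real) \<le> ln (real (7::nat))" by simp
  then show "1944/1000 \<le> ln (real (7::nat))" using lns(4) by linarith
qed (simp_all add: MM_def power_divide)

lemma sm8: "QQ 8"
  unfolding QQ_def
proof (rule generic[where j = 3 and q = "2079/1000"])
  have "ln (8::real) \<le> ln (real (8::nat))" by simp
  then show "2079/1000 \<le> ln (real (8::nat))" using lns(5) by linarith
qed (simp_all add: MM_def power_divide)

lemma sm9: "QQ 9"
  unfolding QQ_def
proof (rule generic[where j = 4 and q = "2079/1000"])
  have "ln (8::real) \<le> ln (real (9::nat))" by simp
  then show "2079/1000 \<le> ln (real (9::nat))" using lns(5) by linarith
qed (simp_all add: MM_def power_divide)

lemma sm10: "QQ 10"
  unfolding QQ_def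
proof (rule generic[where j = 3 and q = "2302/1000"])
  have "ln (10::real) \<le> ln (real (10::nat))" by simp
  then show "2302/1000 \<le> ln (real (10::nat))" using lns(6) by linarith
qed (simp_all add: MM_def power_divide)

lemma sm11: "QQ 11"
  unfolding QQ_def
proof (rule generic[where j = 4 and q = "2302/1000"])
  have "ln (10::real) \<le> ln (real (11::nat))" by simp
  then show "2302/1000 \<le> ln (real (11::nat))" using lns(6) by linarith
qed (simp_all add: MM_def power_divide)

lemma sm12: "QQ 12"
  unfolding QQ_def
proof (rule generic[where j = 4 and q = "2302/1000"])
  have "ln (10::real) \<le> ln (real (12::nat))" by simp
  then show "2302/1000 \<le> ln (real (12::nat))" using lns(6) by linarith
qed (simp_all add: MM_def power_divide)

lemma sm13: "QQ 13"
  unfolding QQ_def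
proof (rule generic[where j = 5 and q = "2302/1000"])
  have "ln (10::real) \<le> ln (real (13::nat))" by simp
  then show "2302/1000 \<le> ln (real (13::nat))" using lns(6) by linarith
qed (simp_all add: MM_def power_divide)

lemma sm14: "QQ 14"
  unfolding QQ_def
proof (rule generic[where j = 3 and q = "2637/1000"])
  have "ln (14::real) \<le> ln (real (14::nat))" by simp
  then show "2637/1000 \<le> ln (real (14::nat))" using lns(7) by linarith
qed (simp_all add: MM_def power_divide)

lemma sm15: "QQ 15"
  unfolding QQ_def
proof (rule generic[where j = 3 and q = "2637/1000"])
  have "ln (14::real) \<le> ln (real (15::nat))" by simp
  then show "2637/1000 \<le> ln (real (15::nat))" using lns(7) by linarith
qed (simp_all add: MM_def power_divide)

lemma sm16: "QQ 16"
  unfolding QQ_def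
proof (rule generic[where j = 3 and q = "2772/1000"])
  have "ln (16::real) \<le> ln (real (16::nat))" by simp
  then show "2772/1000 \<le> ln (real (16::nat))" using lns(8) by linarith
qed (simp_all add: MM_def power_divide)

lemma sm17: "QQ 17"
  unfolding QQ_def
proof (rule generic[where j = 3 and q = "2772/1000"])
  have "ln (16::real) \<le> ln (real (17::nat))" by simp
  then show "2772/1000 \<le> ln (real (17::nat))" using lns(8) by linarith
qed (simp_all add: MM_def power_divide)

lemma sm18: "QQ 18"
  unfolding QQ_def
proof (rule generic[where j = 4 and q = "2772/1000"])
  have "ln (16::real) \<le> ln (real (18::nat))" by simp
  then show "2772/1000 \<le> ln (real (18::nat))" using lns(8) by linarith
qed (simp_all add: MM_def power_divide)

lemma sm19: "QQ 19"
  unfolding QQ_def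
proof (rule generic[where j = 4 and q = "2772/1000"])
  have "ln (16::real) \<le> ln (real (19::nat))" by simp
  then show "2772/1000 \<le> ln (real (19::nat))" using lns(8) by linarith
qed (simp_all add: MM_def power_divide)

lemma sm20: "QQ 20"
  unfolding QQ_def
proof (rule generic[where j = 4 and q = "2772/1000"])
  have "ln (16::real) \<le> ln (real (20::nat))" by simp
  then show "2772/1000 \<le> ln (real (20::nat))" using lns(8) by linarith
qed (simp_all add: MM_def power_divide)

lemma sm21: "QQ 21"
  unfolding QQ_def
proof (rule generic[where j = 4 and q = "2772/1000"])
  have "ln (16::real) \<le> ln (real (21::nat))" by simp
  then show "2772/1000 \<le> ln (real (21::nat))" using lns(8) by linarith
qed (simp_all add: MM_def power_divide)

lemma sm22: "QQ 22"
  unfolding QQ_def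
proof (rule generic[where j = 4 and q = "2772/1000"])
  have "ln (16::real) \<le> ln (real (22::nat))" by simp
  then show "2772/1000 \<le> ln (real (22::nat))" using lns(8) by linarith
qed (simp_all add: MM_def power_divide)

lemma sm23: "QQ 23"
  unfolding QQ_def
proof (rule generic[where j = 4 and q = "2772/1000"])
  have "ln (16::real) \<le> ln (real (23::nat))" by simp
  then show "2772/1000 \<le> ln (real (23::nat))" using lns(8) by linarith
qed (simp_all add: MM_def power_divide)

lemma sm24: "QQ 24"
  unfolding QQ_def
proof (rule generic[where j = 5 and q = "2772/1000"])
  have "ln (16::real) \<le> ln (real (24::nat))" by simp
  then show "2772/1000 \<le> ln (real (24::nat))" using lns(8) by linarith
qed (simp_all add: MM_def power_divide)

lemma sm25: "QQ 25"
  unfolding QQ_def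
proof (rule generic[where j = 5 and q = "2772/1000"])
  have "ln (16::real) \<le> ln (real (25::nat))" by simp
  then show "2772/1000 \<le> ln (real (25::nat))" using lns(8) by linarith
qed (simp_all add: MM_def power_divide)

lemma sm26: "QQ 26"
  unfolding QQ_def
proof (rule generic[where j = 5 and q = "2772/1000"])
  have "ln (16::real) \<le> ln (real (26::nat))" by simp
  then show "2772/1000 \<le> ln (real (26::nat))" using lns(8) by linarith
qed (simp_all add: MM_def power_divide)

lemma sm27: "QQ 27"
  unfolding QQ_def
proof (rule generic[where j = 5 and q = "2772/1000"])
  have "ln (16::real) \<le> ln (real (27::nat))" by simp
  then show "2772/1000 \<le> ln (real (27::nat))" using lns(8) by linarith
qed (simp_all add: MM_def power_divide)

lemma sm28: "QQ 28"
  unfolding QQ_def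
proof (rule generic[where j = 5 and q = "2772/1000"])
  have "ln (16::real) \<le> ln (real (28::nat))" by simp
  then show "2772/1000 \<le> ln (real (28::nat))" using lns(8) by linarith
qed (simp_all add: MM_def power_divide)

lemma sm29: "QQ 29"
  unfolding QQ_def
proof (rule generic[where j = 6 and q = "2772/1000"])
  have "ln (16::real) \<le> ln (real (29::nat))" by simp
  then show "2772/1000 \<le> ln (real (29::nat))" using lns(8) by linarith
qed (simp_all add: MM_def power_divide)

lemma sm30: "QQ 30"
  unfolding QQ_def
proof (rule generic[where j = 6 and q = "2772/1000"])
  have "ln (16::real) \<le> ln (real (30::nat))" by simp
  then show "2772/1000 \<le> ln (real (30::nat))" using lns(8) by linarith
qed (simp_all add: MM_def power_divide)

lemma sm31: "QQ 31"
  unfolding QQ_def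
proof (rule generic[where j = 6 and q = "2772/1000"])
  have "ln (16::real) \<le> ln (real (31::nat))" by simp
  then show "2772/1000 \<le> ln (real (31::nat))" using lns(8) by linarith
qed (simp_all add: MM_def power_divide)

theorem lemma12:
  fixes n :: nat
  assumes "n \<ge> 2"
  defines "N \<equiv> nat \<lfloor>7 * real n ^ 2 * (ln (real n)) ^ 2\<rfloor>"
  shows "measure_pmf.prob (usd_run n 1 N init_conf)
           {tr. \<exists>t < length tr. x2 n (tr ! t) = 0} \<ge> 1 - 1 / real n ^ 2"
proof -
  have P: "PH n N init_conf \<ge> 1 - 1 / real n ^ 2"
  proof (cases "n \<ge> 32")
    case True then show ?thesis unfolding N_def by (rule large)
  next
    case False
    then have "n < 32" by simp
    have L: "[2..<32] = [2,3,4,5,6,7,8,9,10,11,12,13,14,15,16,17,18,19,20,21,22,23,24,25,26,27,28,29,30,31::nat]" by (simp add: upt_rec)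
    have "n \<in> set [2..<32]" unfolding set_upt atLeastLessThan_iff using \<open>n < 32\<close> assms(1) by (rule conjI[rotated])
    then have "n \<in> set [2,3,4,5,6,7,8,9,10,11,12,13,14,15,16,17,18,19,20,21,22,23,24,25,26,27,28,29,30,31]" by (simp only: L)
    then have "QQ n" using sm2 sm3 sm4 sm5 sm6 sm7 sm8 sm9 sm10 sm11 sm12 sm13 sm14 sm15 sm16 sm17 sm18 sm19 sm20 sm21 sm22 sm23 sm24 sm25 sm26 sm27 sm28 sm29 sm30 sm31 by (simp only: set_simps insert_iff empty_iff) blast
    then show ?thesis unfolding N_def QQ_def .
  qed
  moreover have "measure_pmf.prob (usd_run n 1 N init_conf) {tr. \<exists>t < length tr. x2 n (tr ! t) = 0} = PH n N init_conf"
    by (simp add: PH_def Hit_def)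
  ultimately show ?thesis by simp
qed

end
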